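(* Let $\mu$ be a compactly supported Borel probability measure on $\mathbb R^n$, $\alpha\ge0$, $q,t\in\mathbb R$ and $\delta>0$ with $\delta\le\alpha q+t$. Then: (1)(a) if $q\le0$ and $A\subseteq\overline E^\alpha$ is Borel, then $\mathsf P^{\alpha q+t-\delta}(A)\ge2^{\alpha q-\delta}\,\mathsf P^{q,t}_\mu(A)$; (1)(b) if $q\ge0$ and $A\subseteq\underline E_\alpha$ is Borel, then $\mathsf P^{\alpha q+t-\delta}(A)\ge2^{\alpha q-\delta}\,\mathsf P^{q,t}_\mu(A)$; in particular, if $A\subseteq\underline E_\alpha$ is Borel with $\mu(A)>0$, then $\overline\dim_{MB}(A)\ge\alpha$; (2)(a) if $q\le0$ and $A\subseteq\overline E^\alpha$ is Borel, then $\mathsf H^{\alpha q+t-\delta}(A)\ge2^{\alpha q-\delta}\,\mathsf H^{q,t}_\mu(A)$; (2)(b) if $q\ge0$ and $A\subseteq\underline E_\alpha$ is Borel, then $\mathsf H^{\alpha q+t-\delta}(A)\ge2^{\alpha q-\delta}\,\mathsf H^{q,t}_\mu(A)$; in particular, if $A\subseteq\underline E_\alpha$ is Borel with $\mu(A)>0$, then $\underline\dim_{MB}(A)\ge\alpha$.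
   Context: $B(x,r)$ is the closed ball. Multifractal Hewitt–Stromberg measures: for $E\subseteq\mathbb R^n$, $r>0$, $q,t\in\mathbb R$, $N^q_{\mu,r}(E)=\inf\sum_i\mu(B(x_i,r))^q$ over centred coverings $(B(x_i,r))_i$ of $E$ ($x_i\in E$, $E\subseteq\bigcup_iB(x_i,r)$), $M^q_{\mu,r}(E)=\sup\sum_i\mu(B(x_i,r))^q$ over centred packings (pairwise disjoint $B(x_i,r)$, $x_i\in E$); $\mathsf L^{q,t}_\mu(E)=\liminf_{r\to0}N^q_{\mu,r}(E)(2r)^t$, $\mathsf C^{q,t}_\mu(E)=\limsup_{r\to0}M^q_{\mu,r}(E)(2r)^t$; $\overline{\mathsf H}^{q,t}_\mu(E)=\inf\{\sum_i\mathsf L^{q,t}_\mu(E_i):E\subseteq\bigcup_iE_i,E_i\text{ bounded}\}$, $\mathsf H^{q,t}_\mu(E)=\sup_{F\subseteq E}\overline{\mathsf H}^{q,t}_\mu(F)$, $\mathsf P^{q,t}_\mu(E)=\inf\{\sum_i\mathsf C^{q,t}_\mu(E_i):E\subseteq\bigcup_iE_i,E_i\text{ bounded}\}$. Hewitt–Stromberg measures: $N_r(E)$ least number of closed $r$-balls centred in $E$ covering $E$, $M_r(E)$ largest number of points of $E$ with pairwise distances $\ge r$; $\overline{\mathsf H}^s(E)=\liminf_{r\to0}N_r(E)(2r)^s$, $\overline{\mathsf P}^s(E)=\limsup_{r\to0}M_r(E)(2r)^s$, $\mathsf H^s(E)=\inf\{\sum_i\overline{\mathsf H}^s(E_i):E\subseteq\bigcup_iE_i\}$,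 $\mathsf P^s$ analogously; $\underline\dim_{MB}E=\inf\{s\ge0:\mathsf H^s(E)=0\}$, $\overline\dim_{MB}E=\inf\{s\ge0:\mathsf P^s(E)=0\}$. Local dimensions $\underline\alpha_\mu(x)=\liminf_{r\to0}\frac{\log\mu(B(x,r))}{\log r}$, $\overline\alpha_\mu(x)=\limsup_{r\to0}\frac{\log\mu(B(x,r))}{\log r}$; $\overline E^\alpha=\{x\in\operatorname{supp}\mu:\overline\alpha_\mu(x)\le\alpha\}$, $\underline E_\alpha=\{x\in\operatorname{supp}\mu:\underline\alpha_\mu(x)\ge\alpha\}$. *)

theory Defs
  imports "HOL-Probability.Probability"
begin

definition msupp :: "'a::metric_space measure \<Rightarrow> 'a set" where
  "msupp \<mu> = {x. \<forall>e>0. emeasure \<mu> (ball x e) > 0}"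

definition ball_sum :: "'a::metric_space measure \<Rightarrow> real \<Rightarrow> real \<Rightarrow> 'a set \<Rightarrow> ennreal" where
  "ball_sum \<mu> q r C = (\<integral>\<^sup>+ x. ennreal (measure \<mu> (cball x r) powr q) \<partial>count_space C)"

definition mf_N :: "'a::metric_space measure \<Rightarrow> real \<Rightarrow> real \<Rightarrow> 'a set \<Rightarrow> ennreal" where
  "mf_N \<mu> q r E = (INF C \<in> {C. C \<subseteq> E \<and> countable C \<and> E \<subseteq> (\<Union>x\<in>C. cball x r)}. ball_sum \<mu> q r C)"

definition mf_M :: "'a::metric_space measure \<Rightarrow> real \<Rightarrow> real \<Rightarrow> 'a set \<Rightarrow> ennreal" where
  "mf_M \<mu> q r E = (SUP C \<in> {C. C \<subseteq> E \<and> disjoint_family_on (\<lambda>x. cball x r) C}. ball_sum \<mu> q r C)"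

definition mf_L :: "'a::metric_space measure \<Rightarrow> real \<Rightarrow> real \<Rightarrow> 'a set \<Rightarrow> ennreal" where
  "mf_L \<mu> q t E = Liminf (at_right 0) (\<lambda>r. mf_N \<mu> q r E * ennreal ((2 * r) powr t))"

definition mf_C :: "'a::metric_space measure \<Rightarrow> real \<Rightarrow> real \<Rightarrow> 'a set \<Rightarrow> ennreal" where
  "mf_C \<mu> q t E = Limsup (at_right 0) (\<lambda>r. mf_M \<mu> q r E * ennreal ((2 * r) powr t))"

definition mf_Hbar :: "'a::metric_space measure \<Rightarrow> real \<Rightarrow> real \<Rightarrow> 'a set \<Rightarrow> ennreal" where
  "mf_Hbar \<mu> q t E = (INF Es \<in> {Es :: nat \<Rightarrow> 'a set. E \<subseteq> (\<Union>i. Es i) \<and> (\<forall>i. bounded (Es i))}.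
      (\<Sum>i. mf_L \<mu> q t (Es i)))"

definition mf_H :: "'a::metric_space measure \<Rightarrow> real \<Rightarrow> real \<Rightarrow> 'a set \<Rightarrow> ennreal" where
  "mf_H \<mu> q t E = (SUP F \<in> Pow E. mf_Hbar \<mu> q t F)"

definition mf_P :: "'a::metric_space measure \<Rightarrow> real \<Rightarrow> real \<Rightarrow> 'a set \<Rightarrow> ennreal" where
  "mf_P \<mu> q t E = (INF Es \<in> {Es :: nat \<Rightarrow> 'a set. E \<subseteq> (\<Union>i. Es i) \<and> (\<forall>i. bounded (Es i))}.
      (\<Sum>i. mf_C \<mu> q t (Es i)))"

definition ecard :: "'a set \<Rightarrow> ennreal" where
  "ecard C = (if finite C then of_nat (card C) else \<infinity>)"

definition hs_N :: "real \<Rightarrow> 'a::metric_space set \<Rightarrow> ennreal" where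
  "hs_N r E = (INF C \<in> {C. C \<subseteq> E \<and> E \<subseteq> (\<Union>x\<in>C. cball x r)}. ecard C)"

definition hs_M :: "real \<Rightarrow> 'a::metric_space set \<Rightarrow> ennreal" where
  "hs_M r E = (SUP C \<in> {C. C \<subseteq> E \<and> (\<forall>x\<in>C. \<forall>y\<in>C. x \<noteq> y \<longrightarrow> dist x y \<ge> r)}. ecard C)"

definition hs_Hbar :: "real \<Rightarrow> 'a::metric_space set \<Rightarrow> ennreal" where
  "hs_Hbar s E = Liminf (at_right 0) (\<lambda>r. hs_N r E * ennreal ((2 * r) powr s))"

definition hs_Pbar :: "real \<Rightarrow> 'a::metric_space set \<Rightarrow> ennreal" where
  "hs_Pbar s E = Limsup (at_right 0) (\<lambda>r. hs_M r E * ennreal ((2 * r) powr s))"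

definition hs_H :: "real \<Rightarrow> 'a::metric_space set \<Rightarrow> ennreal" where
  "hs_H s E = (INF Es \<in> {Es :: nat \<Rightarrow> 'a set. E \<subseteq> (\<Union>i. Es i)}. (\<Sum>i. hs_Hbar s (Es i)))"

definition hs_P :: "real \<Rightarrow> 'a::metric_space set \<Rightarrow> ennreal" where
  "hs_P s E = (INF Es \<in> {Es :: nat \<Rightarrow> 'a set. E \<subseteq> (\<Union>i. Es i)}. (\<Sum>i. hs_Pbar s (Es i)))"

definition lower_dim_MB :: "'a::metric_space set \<Rightarrow> ereal" where
  "lower_dim_MB E = Inf (ereal ` {s. s \<ge> 0 \<and> hs_H s E = 0})"

definition upper_dim_MB :: "'a::metric_space set \<Rightarrow> ereal" where
  "upper_dim_MB E = Inf (ereal ` {s. s \<ge> 0 \<and> hs_P s E = 0})"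

definition lower_locdim :: "'a::metric_space measure \<Rightarrow> 'a \<Rightarrow> ereal" where
  "lower_locdim \<mu> x = Liminf (at_right 0) (\<lambda>r. ereal (ln (measure \<mu> (cball x r)) / ln r))"

definition upper_locdim :: "'a::metric_space measure \<Rightarrow> 'a \<Rightarrow> ereal" where
  "upper_locdim \<mu> x = Limsup (at_right 0) (\<lambda>r. ereal (ln (measure \<mu> (cball x r)) / ln r))"

definition Ebar_up :: "'a::metric_space measure \<Rightarrow> real \<Rightarrow> 'a set" where
  "Ebar_up \<mu> \<alpha> = {x \<in> msupp \<mu>. upper_locdim \<mu> x \<le> ereal \<alpha>}"

definition E_low :: "'a::metric_space measure \<Rightarrow> real \<Rightarrow> 'a set" where
  "E_low \<mu> \<alpha> = {x \<in> msupp \<mu>. lower_locdim \<mu> x \<ge> ereal \<alpha>}"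

end

theory Submission
  imports Defs
begin


lemma ennreal_pos_real_below:
  fixes y :: ennreal assumes "0 < y" obtains z where "0 < z" "ennreal z < y"
proof -
  obtain w where w: "0 < w" "w < y" using dense assms by blast
  then have "w < \<infinity>" using top.not_eq_extremum by fastforce
  then have "w = ennreal (enn2real w)" by simp
  moreover have "0 < enn2real w" using w \<open>w < \<infinity>\<close>
    by (simp add: enn2real_positive_iff)
  ultimately show ?thesis using that w by metis
qed

lemma L1:
  fixes f :: "real \<Rightarrow> ennreal"
  assumes "\<And>y. y > 0 \<Longrightarrow> \<exists>e>0. \<forall>r. 0 < r \<and> r < e \<longrightarrow> f r \<le> ennreal y"
  shows "Limsup (at_right 0) f = 0"
proof -
  have "Limsup (at_right 0) f \<le> 0"
    unfolding Limsup_le_iff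
  proof (intro allI impI)
    fix y :: ennreal assume "y > 0"
    then obtain z where z: "0 < z" "ennreal z < y" by (rule ennreal_pos_real_below)
    obtain e where e: "e > 0" "\<forall>r. 0 < r \<and> r < e \<longrightarrow> f r \<le> ennreal z" using assms z(1) by blast
    show "\<forall>\<^sub>F x in at_right 0. f x < y"
      unfolding eventually_at_right_field using e z(2)
      by (metis le_less_trans)
  qed
  then show ?thesis by simp
qed

lemma L2:
  fixes f :: "real \<Rightarrow> ennreal"
  assumes "Limsup (at_right 0) f < \<infinity>"
  shows "\<exists>k e. e > 0 \<and> (\<forall>r. 0 < r \<and> r < e \<longrightarrow> f r \<le> ennreal k)"
proof -
  let ?y = "Limsup (at_right 0) f + 1"
  have y: "?y < \<infinity>" using assms by simp
  have "Limsup (at_right 0) f < ?y" using assms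
    by (metis add.right_neutral ennreal_add_left_cancel_less top.not_eq_extremum zero_less_one)
  then have "\<forall>\<^sub>F x in at_right 0. f x < ?y" by (rule Limsup_lessD)
  then obtain b where "b > 0" "\<forall>r>0. r < b \<longrightarrow> f r < ?y"
    unfolding eventually_at_right_field by auto
  moreover have "?y = ennreal (enn2real ?y)" using y by simp
  ultimately show ?thesis
    by (metis less_imp_le)
qed

lemma L3:
  fixes f :: "real \<Rightarrow> ennreal"
  assumes "\<And>y e. y > 0 \<Longrightarrow> e > 0 \<Longrightarrow> \<exists>r. 0 < r \<and> r < e \<and> f r \<le> ennreal y"
  shows "Liminf (at_right 0) f = 0"
proof (rule ccontr)
  assume "Liminf (at_right 0) f \<noteq> 0"
  then have "0 < Liminf (at_right 0) f" by (simp add: zero_less_iff_neq_zero)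
  then obtain z where z: "0 < z" "ennreal z < Liminf (at_right 0) f" by (rule ennreal_pos_real_below)
  have "\<forall>\<^sub>F x in at_right 0. ennreal z < f x" using less_LiminfD[OF z(2)] by simp
  then obtain b where "b > 0" "\<forall>r>0. r < b \<longrightarrow> ennreal z < f r"
    unfolding eventually_at_right_field by auto
  moreover obtain r where "0 < r" "r < b" "f r \<le> ennreal z" using assms z(1) \<open>b > 0\<close> by blast
  ultimately show False by (meson leD)
qed

lemma L4:
  fixes f :: "real \<Rightarrow> ennreal"
  assumes "Liminf (at_right 0) f < \<infinity>"
  shows "\<exists>k. \<forall>e>0. \<exists>r. 0 < r \<and> r < e \<and> f r \<le> ennreal k"
proof (rule ccontr)
  let ?y = "Liminf (at_right 0) f + 1"
  have y: "?y < \<infinity>" using assms by simp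
  have lt: "Liminf (at_right 0) f < ?y" using assms
    by (metis add.right_neutral ennreal_add_left_cancel_less top.not_eq_extremum zero_less_one)
  assume "\<not> ?thesis"
  then obtain e where e: "e > 0" "\<forall>r. 0 < r \<and> r < e \<longrightarrow> \<not> f r \<le> ennreal (enn2real ?y)" by blast
  have "?y = ennreal (enn2real ?y)" using y by simp
  then have "\<forall>\<^sub>F x in at_right 0. ?y \<le> f x"
    unfolding eventually_at_right_field using e by (metis linear)
  then have "?y \<le> Liminf (at_right 0) f" by (rule Liminf_bounded)
  then show False using lt by simp
qed




lemma ecard_count_space: "ecard C = emeasure (count_space C) C"
  by (simp add: ecard_def emeasure_count_space)

lemma ball_sum_le:
  assumes "\<And>x. x \<in> C \<Longrightarrow> measure \<mu> (cball x r) powr q \<le> b" "b \<ge> 0"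
  shows "ball_sum \<mu> q r C \<le> ecard C * ennreal b"
proof -
  have "ball_sum \<mu> q r C \<le> (\<integral>\<^sup>+ x. ennreal b \<partial>count_space C)"
    unfolding ball_sum_def by (rule nn_integral_mono) (use assms in auto)
  also have "\<dots> = ennreal b * emeasure (count_space C) C" by simp
  finally show ?thesis by (simp add: ecard_count_space mult.commute)
qed

lemma ecard_mono: "A \<subseteq> B \<Longrightarrow> ecard A \<le> ecard B"
  unfolding ecard_def using finite_subset card_mono by (auto simp: of_nat_le_iff)

lemma ecard_image_le: "ecard (f ` A) \<le> ecard A"
  unfolding ecard_def using card_image_le by auto

lemma hs_N_attained:
  fixes E :: "'a::metric_space set"
  assumes "hs_N r E < \<infinity>"
  shows "\<exists>C. C \<subseteq> E \<and> E \<subseteq> (\<Union>x\<in>C. cball x r) \<and> finite C \<and> ecard C = hs_N r E"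
proof -
  let ?S = "{C. C \<subseteq> E \<and> E \<subseteq> (\<Union>x\<in>C. cball x r)}"
  obtain C0 where C0: "C0 \<in> ?S" "ecard C0 < \<infinity>" using assms unfolding hs_N_def
    by (auto simp: INF_less_iff)
  then have "finite C0" by (auto simp: ecard_def split: if_splits)
  define n where "n = (LEAST n. \<exists>C\<in>?S. finite C \<and> card C = n)"
  have "\<exists>n. \<exists>C\<in>?S. finite C \<and> card C = n" using C0 \<open>finite C0\<close> by blast
  then have ex: "\<exists>C\<in>?S. finite C \<and> card C = n" unfolding n_def by (rule LeastI_ex)
  then obtain C where C: "C \<in> ?S" "finite C" "card C = n" by blast
  have "of_nat n \<le> hs_N r E" unfolding hs_N_def
  proof (rule INF_greatest)
    fix D assume D: "D \<in> ?S"
    show "of_nat n \<le> ecard D"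
    proof (cases "finite D")
      case True
      then have "n \<le> card D" unfolding n_def using D by (intro Least_le) blast
      then show ?thesis using True by (simp add: ecard_def)
    qed (simp add: ecard_def)
  qed
  moreover have "hs_N r E \<le> ecard C" unfolding hs_N_def using C(1) by (rule INF_lower)
  ultimately have "ecard C = hs_N r E" using C by (simp add: ecard_def)
  then show ?thesis using C by blast
qed

lemma packing_sep:
  fixes C :: "'a::metric_space set"
  assumes "disjoint_family_on (\<lambda>x. cball x r) C" "r > 0"
  shows "\<forall>x\<in>C. \<forall>y\<in>C. x \<noteq> y \<longrightarrow> dist x y \<ge> r"
proof (intro ballI impI)
  fix x y assume xy: "x \<in> C" "y \<in> C" "x \<noteq> y"
  show "dist x y \<ge> r"
  proof (rule ccontr)
    assume "\<not> dist x y \<ge> r"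
    then have "y \<in> cball x r \<inter> cball y r" using assms(2) by auto
    then show False using assms(1) xy unfolding disjoint_family_on_def by blast
  qed
qed

lemma mf_M_le:
  fixes G :: "'a::metric_space set"
  assumes "r > 0" "G \<subseteq> E" "\<And>x. x \<in> G \<Longrightarrow> measure \<mu> (cball x r) powr q \<le> b" "b \<ge> 0"
  shows "mf_M \<mu> q r G \<le> hs_M r E * ennreal b"
  unfolding mf_M_def
proof (rule SUP_least)
  fix C assume C: "C \<in> {C. C \<subseteq> G \<and> disjoint_family_on (\<lambda>x. cball x r) C}"
  have "ball_sum \<mu> q r C \<le> ecard C * ennreal b"
    using C assms(3,4) by (intro ball_sum_le) auto
  also have "ecard C \<le> hs_M r E" unfolding hs_M_def
    using C assms(2) packing_sep[of r C] assms(1) by (intro SUP_upper) auto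
  finally show "ball_sum \<mu> q r C \<le> hs_M r E * ennreal b" by (simp add: mult_right_mono)
qed

lemma mf_N_le:
  fixes G :: "'a::metric_space set"
  assumes "G \<subseteq> E" "finite C" "E \<subseteq> (\<Union>x\<in>C. cball x \<rho>)"
    "\<And>x. x \<in> G \<Longrightarrow> measure \<mu> (cball x (2*\<rho>)) powr q \<le> b" "b \<ge> 0"
  shows "mf_N \<mu> q (2*\<rho>) G \<le> ecard C * ennreal b"
proof -
  define C' where "C' = {c\<in>C. \<exists>y\<in>G. dist c y \<le> \<rho>}"
  define f where "f c = (SOME y. y \<in> G \<and> dist c y \<le> \<rho>)" for c
  have f: "f c \<in> G \<and> dist c (f c) \<le> \<rho>" if "c \<in> C'" for c
    using that unfolding C'_def f_def by (metis (mono_tags, lifting) mem_Collect_eq someI_ex)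
  let ?Y = "f ` C'"
  have Y: "?Y \<subseteq> G" using f by auto
  have fin: "finite ?Y" using assms(2) unfolding C'_def by auto
  have cov: "G \<subseteq> (\<Union>x\<in>?Y. cball x (2*\<rho>))"
  proof
    fix g assume g: "g \<in> G"
    then obtain c where c: "c \<in> C" "g \<in> cball c \<rho>" using assms(1,3) by blast
    then have cC: "c \<in> C'" using g unfolding C'_def by auto
    have "dist (f c) g \<le> dist (f c) c + dist c g" by (rule dist_triangle)
    also have "\<dots> \<le> 2*\<rho>" using f[OF cC] c(2) by (simp add: dist_commute)
    finally show "g \<in> (\<Union>x\<in>?Y. cball x (2*\<rho>))" using cC by auto
  qed
  have "mf_N \<mu> q (2*\<rho>) G \<le> ball_sum \<mu> q (2*\<rho>) ?Y"
    unfolding mf_N_def using Y fin cov by (intro INF_lower) (auto intro: countable_finite)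
  also have "\<dots> \<le> ecard ?Y * ennreal b" using Y assms(4,5) by (intro ball_sum_le) auto
  also have "\<dots> \<le> ecard C * ennreal b"
  proof -
    have "ecard ?Y \<le> ecard C'" by (rule ecard_image_le)
    also have "\<dots> \<le> ecard C" by (rule ecard_mono) (auto simp: C'_def)
    finally show ?thesis by (simp add: mult_right_mono)
  qed
  finally show ?thesis .
qed

lemma hs_N_le_hs_M:
  fixes E :: "'a::metric_space set"
  assumes "r > 0"
  shows "hs_N r E \<le> hs_M r E"
proof (cases "hs_M r E = \<infinity>")
  case False
  let ?P = "\<lambda>C. C \<subseteq> E \<and> (\<forall>x\<in>C. \<forall>y\<in>C. x \<noteq> y \<longrightarrow> dist x y \<ge> r)"
  have le: "ecard C \<le> hs_M r E" if "?P C" for C unfolding hs_M_def using that by (intro SUP_upper) simp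
  define k where "k = enn2real (hs_M r E)"
  have k: "hs_M r E = ennreal k" "k \<ge> 0" unfolding k_def using False
    by (simp_all add: top.not_eq_extremum ennreal_enn2real)
  have fin: "finite C" if "?P C" for C
  proof (rule ccontr)
    assume "infinite C"
    then have "ecard C = \<infinity>" by (simp add: ecard_def)
    with le[OF that] False show False by (simp add: top_unique)
  qed
  have bnd: "card C < nat (ceiling k) + 1" if "?P C" for C
  proof -
    have "ennreal (real (card C)) \<le> ennreal k" using le[OF that] fin[OF that] k
      by (simp add: ecard_def ennreal_of_nat_eq_real_of_nat)
    then have "real (card C) \<le> k" using k(2) by (simp add: ennreal_le_iff)
    then show ?thesis by linarith
  qed
  have P0: "?P {}" by simp
  have "\<exists>C. ?P C \<and> (\<forall>D. ?P D \<longrightarrow> card D \<le> card C)"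
    by (rule ex_has_greatest_nat[of ?P "{}" card "nat (ceiling k) + 1", OF P0]) (intro allI impI bnd)
  then obtain C where C: "?P C" "\<forall>D. ?P D \<longrightarrow> card D \<le> card C" by (elim exE conjE) blast
  have cov: "E \<subseteq> (\<Union>x\<in>C. cball x r)"
  proof
    fix y assume y: "y \<in> E"
    show "y \<in> (\<Union>x\<in>C. cball x r)"
    proof (rule ccontr)
      assume ny: "y \<notin> (\<Union>x\<in>C. cball x r)"
      then have far: "\<forall>x\<in>C. dist x y > r" by auto
      then have "y \<notin> C" using assms by force
      have "?P (insert y C)"
      proof -
        have "\<forall>x\<in>insert y C. \<forall>z\<in>insert y C. x \<noteq> z \<longrightarrow> dist x z \<ge> r"
          using C(1) far by (auto simp: dist_commute less_imp_le)
        then show ?thesis using C(1) y by blast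
      qed
      then have "card (insert y C) \<le> card C" using C(2) by blast
      then show False using \<open>y \<notin> C\<close> fin[OF C(1)] by simp
    qed
  qed
  have "hs_N r E \<le> ecard C" unfolding hs_N_def using C(1) cov by (intro INF_lower) simp
  also have "\<dots> \<le> hs_M r E" by (rule le[OF C(1)])
  finally show ?thesis .
qed simp




lemma meas_pos:
  assumes "prob_space \<mu>" "sets \<mu> = sets borel" "x \<in> msupp \<mu>" "r > 0"
  shows "measure \<mu> (cball x r) > 0"
proof -
  interpret prob_space \<mu> by fact
  have "0 < emeasure \<mu> (ball x r)" using assms(3,4) unfolding msupp_def by auto
  also have "\<dots> \<le> emeasure \<mu> (cball x r)"
    by (rule emeasure_mono) (auto simp: assms(2))
  finally show ?thesis by (simp add: emeasure_eq_measure)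
qed

lemma powr_bound_from_ln:
  fixes m \<rho> q \<gamma> :: real
  assumes "m > 0" "\<rho> > 0" "q * ln m \<le> \<gamma> * ln \<rho>"
  shows "m powr q \<le> \<rho> powr \<gamma>"
  using assms by (simp add: powr_def mult.commute)

lemma KEY_up:
  assumes "prob_space \<mu>" "sets \<mu> = sets borel" "q \<le> 0" "\<gamma> < \<alpha> * q" "x \<in> Ebar_up \<mu> \<alpha>"
  shows "\<exists>e>0. \<forall>\<rho>. 0 < \<rho> \<and> \<rho> < e \<longrightarrow> measure \<mu> (cball x \<rho>) powr q \<le> \<rho> powr \<gamma>"
proof -
  define D where "D = \<alpha> * q - \<gamma>"
  define \<epsilon> where "\<epsilon> = D / (1 - q)"
  have D: "D > 0" using assms(4) by (simp add: D_def)
  have eps: "\<epsilon> > 0" using D assms(3) by (simp add: \<epsilon>_def)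
  have "q * \<epsilon> \<ge> - D"
  proof -
    have "q * D \<ge> - D * (1 - q)" using D by (simp add: algebra_simps)
    then have "q * D / (1 - q) \<ge> - D" using assms(3) by (simp add: le_divide_eq)
    then show ?thesis by (simp add: \<epsilon>_def)
  qed
  then have key: "q * (\<alpha> + \<epsilon>) \<ge> \<gamma>" by (simp add: D_def algebra_simps)
  have xs: "x \<in> msupp \<mu>" "upper_locdim \<mu> x \<le> ereal \<alpha>" using assms(5) by (auto simp: Ebar_up_def)
  have "upper_locdim \<mu> x < ereal (\<alpha> + \<epsilon>)" using xs(2) eps by (simp add: le_less_trans)
  then have "\<forall>\<^sub>F r in at_right 0. ereal (ln (measure \<mu> (cball x r)) / ln r) < ereal (\<alpha> + \<epsilon>)"
    unfolding upper_locdim_def by (rule Limsup_lessD)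
  then obtain b where b: "b > 0" "\<forall>r>0. r < b \<longrightarrow> ln (measure \<mu> (cball x r)) / ln r < \<alpha> + \<epsilon>"
    unfolding eventually_at_right_field by auto
  show ?thesis
  proof (intro exI[of _ "min b 1"] conjI allI impI)
    show "min b 1 > 0" using b by simp
    fix \<rho> assume \<rho>: "0 < \<rho> \<and> \<rho> < min b 1"
    let ?m = "measure \<mu> (cball x \<rho>)"
    have m: "?m > 0" using meas_pos[OF assms(1,2) xs(1)] \<rho> by simp
    have l: "ln \<rho> < 0" using \<rho> by simp
    have "ln ?m / ln \<rho> < \<alpha> + \<epsilon>" using b \<rho> by simp
    then have "(\<alpha> + \<epsilon>) * ln \<rho> < ln ?m" using l by (simp add: divide_less_eq)
    then have "q * ln ?m \<le> q * ((\<alpha> + \<epsilon>) * ln \<rho>)" using assms(3)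
      by (simp add: mult_left_mono_neg)
    also have "\<dots> = (q * (\<alpha> + \<epsilon>)) * ln \<rho>" by simp
    also have "\<dots> \<le> \<gamma> * ln \<rho>" using key l by (simp add: mult_right_mono_neg)
    finally show "?m powr q \<le> \<rho> powr \<gamma>" using m \<rho> by (intro powr_bound_from_ln) auto
  qed
qed

lemma KEY_low:
  assumes "prob_space \<mu>" "sets \<mu> = sets borel" "q \<ge> 0" "\<gamma> < \<alpha> * q" "x \<in> E_low \<mu> \<alpha>"
  shows "\<exists>e>0. \<forall>\<rho>. 0 < \<rho> \<and> \<rho> < e \<longrightarrow> measure \<mu> (cball x \<rho>) powr q \<le> \<rho> powr \<gamma>"
proof -
  define D where "D = \<alpha> * q - \<gamma>"
  define \<epsilon> where "\<epsilon> = D / (1 + q)"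
  have D: "D > 0" using assms(4) by (simp add: D_def)
  have eps: "\<epsilon> > 0" using D assms(3) by (simp add: \<epsilon>_def)
  have "q * \<epsilon> \<le> D"
  proof -
    have "q * D \<le> D * (1 + q)" using D by (simp add: algebra_simps)
    then have "q * D / (1 + q) \<le> D" using assms(3) by (simp add: divide_le_eq)
    then show ?thesis by (simp add: \<epsilon>_def)
  qed
  then have key: "q * (\<alpha> - \<epsilon>) \<ge> \<gamma>" by (simp add: D_def algebra_simps)
  have xs: "x \<in> msupp \<mu>" "lower_locdim \<mu> x \<ge> ereal \<alpha>" using assms(5) by (auto simp: E_low_def)
  have "ereal (\<alpha> - \<epsilon>) < ereal \<alpha>" using eps by simp
  then have "ereal (\<alpha> - \<epsilon>) < lower_locdim \<mu> x" using xs(2) by (rule less_le_trans)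
  then have "\<forall>\<^sub>F r in at_right 0. ereal (\<alpha> - \<epsilon>) < ereal (ln (measure \<mu> (cball x r)) / ln r)"
    unfolding lower_locdim_def by (rule less_LiminfD)
  then obtain b where b: "b > 0" "\<forall>r>0. r < b \<longrightarrow> \<alpha> - \<epsilon> < ln (measure \<mu> (cball x r)) / ln r"
    unfolding eventually_at_right_field by auto
  show ?thesis
  proof (intro exI[of _ "min b 1"] conjI allI impI)
    show "min b 1 > 0" using b by simp
    fix \<rho> assume \<rho>: "0 < \<rho> \<and> \<rho> < min b 1"
    let ?m = "measure \<mu> (cball x \<rho>)"
    have m: "?m > 0" using meas_pos[OF assms(1,2) xs(1)] \<rho> by simp
    have l: "ln \<rho> < 0" using \<rho> by simp
    have "\<alpha> - \<epsilon> < ln ?m / ln \<rho>" using b \<rho> by simp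
    then have "ln ?m < (\<alpha> - \<epsilon>) * ln \<rho>" using l by (simp add: less_divide_eq)
    then have "q * ln ?m \<le> q * ((\<alpha> - \<epsilon>) * ln \<rho>)" using assms(3)
      by (simp add: mult_left_mono)
    also have "\<dots> = (q * (\<alpha> - \<epsilon>)) * ln \<rho>" by simp
    also have "\<dots> \<le> \<gamma> * ln \<rho>" using key l by (simp add: mult_right_mono_neg)
    finally show "?m powr q \<le> \<rho> powr \<gamma>" using m \<rho> by (intro powr_bound_from_ln) auto
  qed
qed




lemma small_powr:
  fixes d z :: real assumes "d > 0" "z > 0"
  shows "\<exists>e>0. \<forall>r. 0 < r \<and> r < e \<longrightarrow> (2*r) powr d \<le> z"
proof (intro exI[of _ "z powr (1/d) / 2"] conjI allI impI)
  show "z powr (1/d) / 2 > 0" using assms by simp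
  fix r assume r: "0 < r \<and> r < z powr (1/d) / 2"
  have "(2*r) powr d \<le> (z powr (1/d)) powr d" using r assms by (intro powr_mono2) auto
  also have "\<dots> = z" using assms by (simp add: powr_powr)
  finally show "(2*r) powr d \<le> z" .
qed

lemma suminf_term_le: "(f::nat \<Rightarrow> ennreal) i \<le> (\<Sum>n. f n)"
  using sum_le_suminf[of f "{i}"] by (simp add: summableI)

lemma ident_P:
  fixes r :: real assumes "r > 0" "\<gamma> + t = s0 + d"
  shows "r powr \<gamma> * (2*r) powr t = (2*r) powr s0 * (2 powr (-\<gamma>) * (2*r) powr d)"
proof -
  have "(2*r) powr \<gamma> = 2 powr \<gamma> * r powr \<gamma>" using assms by (simp add: powr_mult)
  then have "r powr \<gamma> = 2 powr (-\<gamma>) * (2*r) powr \<gamma>" by (simp add: powr_minus field_simps)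
  then have "r powr \<gamma> * (2*r) powr t = 2 powr (-\<gamma>) * (2*r) powr (\<gamma> + t)"
    by (simp add: powr_add)
  also have "\<dots> = 2 powr (-\<gamma>) * ((2*r) powr s0 * (2*r) powr d)" using assms(2) by (simp add: powr_add)
  finally show ?thesis by simp
qed

lemma ident_H:
  fixes a :: real assumes "a > 0" "\<gamma> + t = s0 + d"
  shows "a powr \<gamma> * (2*a) powr t = a powr s0 * (2 powr t * a powr d)"
proof -
  have "(2*a) powr t = 2 powr t * a powr t" using assms by (simp add: powr_mult)
  then have "a powr \<gamma> * (2*a) powr t = 2 powr t * a powr (\<gamma> + t)" by (simp add: powr_add)
  also have "\<dots> = 2 powr t * (a powr s0 * a powr d)" using assms(2) by (simp add: powr_add)
  finally show ?thesis by simp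
qed

definition Am :: "'a::metric_space measure \<Rightarrow> real \<Rightarrow> real \<Rightarrow> 'a set \<Rightarrow> nat \<Rightarrow> 'a set" where
  "Am \<mu> q \<gamma> A m = {x\<in>A. \<forall>\<rho>. 0 < \<rho> \<and> \<rho> < 1 / real (Suc m) \<longrightarrow> measure \<mu> (cball x \<rho>) powr q \<le> \<rho> powr \<gamma>}"

lemma Am_cover:
  assumes "\<And>x. x \<in> A \<Longrightarrow> \<exists>e>0. \<forall>\<rho>. 0 < \<rho> \<and> \<rho> < e \<longrightarrow> measure \<mu> (cball x \<rho>) powr q \<le> \<rho> powr \<gamma>"
  shows "A \<subseteq> (\<Union>m. Am \<mu> q \<gamma> A m)"
proof
  fix x assume x: "x \<in> A"
  obtain e where e: "e > 0" "\<forall>\<rho>. 0 < \<rho> \<and> \<rho> < e \<longrightarrow> measure \<mu> (cball x \<rho>) powr q \<le> \<rho> powr \<gamma>"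
    using assms[OF x] by blast
  obtain n where n: "n > 0" "inverse (real n) < e" using ex_inverse_of_nat_less[OF e(1)] by blast
  then have "1 / real (Suc (n - 1)) < e" by (simp add: inverse_eq_divide)
  then have "x \<in> Am \<mu> q \<gamma> A (n - 1)" using x e(2) unfolding Am_def by force
  then show "x \<in> (\<Union>m. Am \<mu> q \<gamma> A m)" by blast
qed

lemma Am_sub: "Am \<mu> q \<gamma> A m \<subseteq> A" by (auto simp: Am_def)

lemma piece_P:
  fixes E :: "'a::metric_space set"
  assumes "hs_Pbar s0 E < \<infinity>" "d > 0" "\<gamma> + t = s0 + d" "G \<subseteq> E" "G \<subseteq> Am \<mu> q \<gamma> A m"
  shows "mf_C \<mu> q t G = 0"
proof -
  obtain k e where ke: "e > 0" "\<forall>r. 0 < r \<and> r < e \<longrightarrow> hs_M r E * ennreal ((2*r) powr s0) \<le> ennreal k"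
    using L2[OF assms(1)[unfolded hs_Pbar_def]] by blast
  define k' where "k' = max k 1"
  have k': "k' > 0" "ennreal k \<le> ennreal k'" by (auto simp: k'_def)
  show ?thesis unfolding mf_C_def
  proof (rule L1)
    fix y :: real assume y: "y > 0"
    define z where "z = y / (k' * 2 powr (-\<gamma>))"
    have z: "z > 0" using y k' by (simp add: z_def)
    obtain e2 where e2: "e2 > 0" "\<forall>r. 0 < r \<and> r < e2 \<longrightarrow> (2*r) powr d \<le> z"
      using small_powr[OF assms(2) z] by blast
    show "\<exists>e>0. \<forall>r. 0 < r \<and> r < e \<longrightarrow> mf_M \<mu> q r G * ennreal ((2 * r) powr t) \<le> ennreal y"
    proof (intro exI[of _ "min e (min e2 (1 / real (Suc m)))"] conjI allI impI)
      show "min e (min e2 (1 / real (Suc m))) > 0" using ke e2 by simp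
      fix r assume r: "0 < r \<and> r < min e (min e2 (1 / real (Suc m)))"
      define w where "w = 2 powr (-\<gamma>) * (2*r) powr d"
      have w: "w \<ge> 0" by (simp add: w_def)
      have "mf_M \<mu> q r G \<le> hs_M r E * ennreal (r powr \<gamma>)"
        using r assms(4,5) by (intro mf_M_le) (auto simp: Am_def)
      then have "mf_M \<mu> q r G * ennreal ((2 * r) powr t)
          \<le> hs_M r E * ennreal (r powr \<gamma>) * ennreal ((2 * r) powr t)"
        by (rule mult_right_mono) simp
      also have "\<dots> = hs_M r E * ennreal (r powr \<gamma> * (2 * r) powr t)"
        by (simp add: ennreal_mult mult.assoc)
      also have "\<dots> = hs_M r E * ennreal ((2*r) powr s0 * w)"
        using ident_P[of r \<gamma> t s0 d] r assms(3) by (simp add: w_def)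
      also have "\<dots> = (hs_M r E * ennreal ((2*r) powr s0)) * ennreal w"
        using w by (simp add: ennreal_mult mult.assoc)
      also have "\<dots> \<le> ennreal k' * ennreal w"
        using ke(2) r k'(2) by (intro mult_right_mono) (auto intro: order.trans)
      also have "\<dots> = ennreal (k' * w)" using k' w by (simp add: ennreal_mult)
      also have "\<dots> \<le> ennreal y"
      proof -
        have "(2*r) powr d \<le> z" using e2 r by simp
        then have "k' * 2 powr (-\<gamma>) * (2*r) powr d \<le> k' * 2 powr (-\<gamma>) * z"
          using k' by (intro mult_left_mono) auto
        also have "\<dots> = y" using k' by (simp add: z_def)
        finally have "k' * w \<le> y" by (simp add: w_def mult.assoc)
        then show ?thesis by (rule ennreal_leI)
      qed
      finally show "mf_M \<mu> q r G * ennreal ((2 * r) powr t) \<le> ennreal y" .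
    qed
  qed
qed

lemma piece_H:
  fixes E :: "'a::metric_space set"
  assumes "hs_Hbar s0 E < \<infinity>" "d > 0" "\<gamma> + t = s0 + d" "G \<subseteq> E" "G \<subseteq> Am \<mu> q \<gamma> A m"
  shows "mf_L \<mu> q t G = 0"
proof -
  obtain k where k: "\<forall>e>0. \<exists>r. 0 < r \<and> r < e \<and> hs_N r E * ennreal ((2*r) powr s0) \<le> ennreal k"
    using L4[OF assms(1)[unfolded hs_Hbar_def]] by blast
  define k' where "k' = max k 1"
  have k': "k' > 0" "ennreal k \<le> ennreal k'" by (auto simp: k'_def)
  show ?thesis unfolding mf_L_def
  proof (rule L3)
    fix y e :: real assume y: "y > 0" and e: "e > 0"
    define z where "z = y / (k' * 2 powr t)"
    have z: "z > 0" using y k' by (simp add: z_def)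
    obtain e2 where e2: "e2 > 0" "\<forall>r. 0 < r \<and> r < e2 \<longrightarrow> (2*r) powr d \<le> z"
      using small_powr[OF assms(2) z] by blast
    define e' where "e' = min (e/2) (min (e2/2) (1 / (2 * real (Suc m))))"
    have e': "e' > 0" using e e2 by (simp add: e'_def)
    obtain \<rho> where \<rho>: "0 < \<rho>" "\<rho> < e'" "hs_N \<rho> E * ennreal ((2*\<rho>) powr s0) \<le> ennreal k"
      using k e' by blast
    have pos: "(2*\<rho>) powr s0 > 0" using \<rho> by simp
    have fin: "hs_N \<rho> E < \<infinity>"
    proof -
      have "hs_N \<rho> E * ennreal ((2*\<rho>) powr s0) < \<infinity>"
        using \<rho>(3) by (rule le_less_trans) simp
      then show ?thesis using \<rho>(1) by (auto simp: ennreal_mult_less_top)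
    qed
    obtain C where C: "C \<subseteq> E" "E \<subseteq> (\<Union>x\<in>C. cball x \<rho>)" "finite C" "ecard C = hs_N \<rho> E"
      using hs_N_attained[OF fin] by blast
    define a where "a = 2*\<rho>"
    have a: "a > 0" "a < e" "a < e2" "a < 1 / real (Suc m)"
      using \<rho> by (auto simp: a_def e'_def field_simps)
    define w where "w = 2 powr t * a powr d"
    have w: "w \<ge> 0" by (simp add: w_def)
    show "\<exists>r. 0 < r \<and> r < e \<and> mf_N \<mu> q r G * ennreal ((2 * r) powr t) \<le> ennreal y"
    proof (intro exI[of _ a] conjI)
      show "0 < a" "a < e" using a by auto
      have "mf_N \<mu> q a G \<le> ecard C * ennreal (a powr \<gamma>)"
        unfolding a_def using assms(4,5) C a by (intro mf_N_le) (auto simp: Am_def a_def)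
      then have "mf_N \<mu> q a G * ennreal ((2 * a) powr t)
          \<le> ecard C * ennreal (a powr \<gamma>) * ennreal ((2 * a) powr t)"
        by (rule mult_right_mono) simp
      also have "\<dots> = ecard C * ennreal (a powr \<gamma> * (2 * a) powr t)"
        by (simp add: ennreal_mult mult.assoc)
      also have "\<dots> = ecard C * ennreal (a powr s0 * w)"
        using ident_H[of a \<gamma> t s0 d] a assms(3) by (simp add: w_def)
      also have "\<dots> = (hs_N \<rho> E * ennreal ((2*\<rho>) powr s0)) * ennreal w"
        using w C(4) by (simp add: ennreal_mult mult.assoc a_def)
      also have "\<dots> \<le> ennreal k' * ennreal w"
        using \<rho>(3) k'(2) by (intro mult_right_mono) (auto intro: order.trans)
      also have "\<dots> = ennreal (k' * w)" using k' w by (simp add: ennreal_mult)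
      also have "\<dots> \<le> ennreal y"
      proof -
        have "(2*\<rho>) powr d \<le> z" using e2 \<rho> a by (simp add: a_def)
        then have "a powr d \<le> z" by (simp add: a_def)
        then have "k' * 2 powr t * a powr d \<le> k' * 2 powr t * z"
          using k' by (intro mult_left_mono) auto
        also have "\<dots> = y" using k' by (simp add: z_def)
        finally have "k' * w \<le> y" by (simp add: w_def mult.assoc)
        then show ?thesis by (rule ennreal_leI)
      qed
      finally show "mf_N \<mu> q a G * ennreal ((2 * a) powr t) \<le> ennreal y" .
    qed
  qed
qed




lemma Ginj: "\<exists>n. prod_decode n = (i, m)"
  by (metis prod_decode_inverse prod_encode_inverse)

lemma P_main:
  fixes \<mu> :: "'a::metric_space measure"
  assumes "compact (msupp \<mu>)" "A \<subseteq> msupp \<mu>" "d > 0" "\<gamma> + t = s0 + d"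
    "\<And>x. x \<in> A \<Longrightarrow> \<exists>e>0. \<forall>\<rho>. 0 < \<rho> \<and> \<rho> < e \<longrightarrow> measure \<mu> (cball x \<rho>) powr q \<le> \<rho> powr \<gamma>"
    "hs_P s0 A < \<infinity>"
  shows "mf_P \<mu> q t A = 0"
proof -
  obtain Es where Es: "A \<subseteq> (\<Union>i. Es i)" "(\<Sum>i. hs_Pbar s0 (Es i)) < \<infinity>"
    using assms(6) unfolding hs_P_def by (auto simp: INF_less_iff)
  have fin: "hs_Pbar s0 (Es i) < \<infinity>" for i using suminf_term_le Es(2) by (rule le_less_trans)
  define G where "G n = (case prod_decode n of (i, m) \<Rightarrow> Es i \<inter> Am \<mu> q \<gamma> A m)" for n
  have cov: "A \<subseteq> (\<Union>n. G n)"
  proof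
    fix x assume x: "x \<in> A"
    obtain i where i: "x \<in> Es i" using Es(1) x by blast
    obtain m where m: "x \<in> Am \<mu> q \<gamma> A m" using Am_cover[of A \<mu> q \<gamma>] assms(5) x by blast
    obtain n where "prod_decode n = (i, m)" using Ginj by blast
    then have "x \<in> G n" using i m by (simp add: G_def)
    then show "x \<in> (\<Union>n. G n)" by blast
  qed
  have sub: "G n \<subseteq> A" for n by (auto simp: G_def Am_def split: prod.splits)
  have bnd: "bounded (G n)" for n
    using sub assms(2) compact_imp_bounded[OF assms(1)] by (meson bounded_subset order.trans)
  have z: "mf_C \<mu> q t (G n) = 0" for n
  proof -
    obtain i m where im: "prod_decode n = (i, m)" by (cases "prod_decode n")
    show ?thesis using piece_P[OF fin[of i] assms(3,4), of "G n" \<mu> q A m] im by (simp add: G_def)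
  qed
  have "mf_P \<mu> q t A \<le> (\<Sum>n. mf_C \<mu> q t (G n))"
    unfolding mf_P_def by (rule INF_lower) (use cov bnd in auto)
  then show ?thesis by (simp add: z)
qed

lemma H_main:
  fixes \<mu> :: "'a::metric_space measure"
  assumes "compact (msupp \<mu>)" "A \<subseteq> msupp \<mu>" "d > 0" "\<gamma> + t = s0 + d"
    "\<And>x. x \<in> A \<Longrightarrow> \<exists>e>0. \<forall>\<rho>. 0 < \<rho> \<and> \<rho> < e \<longrightarrow> measure \<mu> (cball x \<rho>) powr q \<le> \<rho> powr \<gamma>"
    "hs_H s0 A < \<infinity>"
  shows "mf_H \<mu> q t A = 0"
proof -
  obtain Es where Es: "A \<subseteq> (\<Union>i. Es i)" "(\<Sum>i. hs_Hbar s0 (Es i)) < \<infinity>"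
    using assms(6) unfolding hs_H_def by (auto simp: INF_less_iff)
  have fin: "hs_Hbar s0 (Es i) < \<infinity>" for i using suminf_term_le Es(2) by (rule le_less_trans)
  have "mf_Hbar \<mu> q t F = 0" if F: "F \<subseteq> A" for F
  proof -
    define G where "G n = (case prod_decode n of (i, m) \<Rightarrow> F \<inter> Es i \<inter> Am \<mu> q \<gamma> A m)" for n
    have cov: "F \<subseteq> (\<Union>n. G n)"
    proof
      fix x assume xF: "x \<in> F"
      then have x: "x \<in> A" using F by blast
      obtain i where i: "x \<in> Es i" using Es(1) x by blast
      obtain m where m: "x \<in> Am \<mu> q \<gamma> A m" using Am_cover[of A \<mu> q \<gamma>] assms(5) x by blast
      obtain n where "prod_decode n = (i, m)" using Ginj by blast
      then have "x \<in> G n" using i m xF by (simp add: G_def)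
      then show "x \<in> (\<Union>n. G n)" by blast
    qed
    have sub: "G n \<subseteq> A" for n by (auto simp: G_def Am_def split: prod.splits)
    have bnd: "bounded (G n)" for n
      using sub assms(2) compact_imp_bounded[OF assms(1)] by (meson bounded_subset order.trans)
    have z: "mf_L \<mu> q t (G n) = 0" for n
    proof -
      obtain i m where im: "prod_decode n = (i, m)" by (cases "prod_decode n")
      show ?thesis using piece_H[OF fin[of i] assms(3,4), of "G n" \<mu> q A m] im by (auto simp: G_def)
    qed
    have "mf_Hbar \<mu> q t F \<le> (\<Sum>n. mf_L \<mu> q t (G n))"
      unfolding mf_Hbar_def by (rule INF_lower) (use cov bnd in auto)
    then show ?thesis by (simp add: z)
  qed
  then show ?thesis unfolding mf_H_def by (auto intro!: antisym SUP_least)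
qed




lemma null_piece:
  fixes \<mu> :: "'a::metric_space measure"
  assumes "prob_space \<mu>" "sets \<mu> = sets borel"
    "hs_Hbar s E < \<infinity>" "s < \<beta>" "G \<subseteq> E" "G \<subseteq> Am \<mu> 1 \<beta> A m" "y > 0"
  shows "\<exists>U\<in>sets \<mu>. G \<subseteq> U \<and> emeasure \<mu> U \<le> ennreal y"
proof -
  interpret prob_space \<mu> by fact
  obtain k where k: "\<forall>e>0. \<exists>r. 0 < r \<and> r < e \<and> hs_N r E * ennreal ((2*r) powr s) \<le> ennreal k"
    using L4[OF assms(3)[unfolded hs_Hbar_def]] by blast
  define k' where "k' = max k 1"
  have k': "k' > 0" "ennreal k \<le> ennreal k'" by (auto simp: k'_def)
  define d where "d = \<beta> - s"
  have d: "d > 0" using assms(4) by (simp add: d_def)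
  define z where "z = y / k'"
  have z: "z > 0" using assms(7) k' by (simp add: z_def)
  obtain e2 where e2: "e2 > 0" "\<forall>r. 0 < r \<and> r < e2 \<longrightarrow> (2*r) powr d \<le> z"
    using small_powr[OF d z] by blast
  define e' where "e' = min (e2/2) (1 / (2 * real (Suc m)))"
  have e': "e' > 0" using e2 by (simp add: e'_def)
  obtain \<rho> where \<rho>: "0 < \<rho>" "\<rho> < e'" "hs_N \<rho> E * ennreal ((2*\<rho>) powr s) \<le> ennreal k"
    using k e' by blast
  have fin: "hs_N \<rho> E < \<infinity>"
  proof -
    have "hs_N \<rho> E * ennreal ((2*\<rho>) powr s) < \<infinity>"
      using \<rho>(3) by (rule le_less_trans) simp
    then show ?thesis using \<rho>(1) by (auto simp: ennreal_mult_less_top)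
  qed
  obtain C where C: "C \<subseteq> E" "E \<subseteq> (\<Union>x\<in>C. cball x \<rho>)" "finite C" "ecard C = hs_N \<rho> E"
    using hs_N_attained[OF fin] by blast
  define a where "a = 2*\<rho>"
  have a: "a > 0" "a < e2" "a < 1 / real (Suc m)"
    using \<rho> by (auto simp: a_def e'_def field_simps)
  define C' where "C' = {c\<in>C. \<exists>g\<in>G. dist c g \<le> \<rho>}"
  define U where "U = (\<Union>c\<in>C'. cball c \<rho>)"
  have finC': "finite C'" using C(3) by (simp add: C'_def)
  have U: "U \<in> sets \<mu>" unfolding U_def assms(2) using finC'
    by (intro sets.finite_UN) auto
  have GU: "G \<subseteq> U"
  proof
    fix g assume g: "g \<in> G"
    then obtain c where c: "c \<in> C" "g \<in> cball c \<rho>" using assms(5) C(2) by blast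
    then have "c \<in> C'" using g by (auto simp: C'_def)
    then show "g \<in> U" using c unfolding U_def by blast
  qed
  have each: "emeasure \<mu> (cball c \<rho>) \<le> ennreal (a powr \<beta>)" if c: "c \<in> C'" for c
  proof -
    obtain g where g: "g \<in> G" "dist c g \<le> \<rho>" using c by (auto simp: C'_def)
    have "cball c \<rho> \<subseteq> cball g a"
    proof
      fix x assume "x \<in> cball c \<rho>"
      then have "dist c x \<le> \<rho>" by simp
      moreover have "dist g x \<le> dist g c + dist c x" by (rule dist_triangle)
      ultimately show "x \<in> cball g a" using g(2) by (simp add: a_def dist_commute)
    qed
    then have "emeasure \<mu> (cball c \<rho>) \<le> emeasure \<mu> (cball g a)"
      by (intro emeasure_mono) (auto simp: assms(2))
    also have "\<dots> = ennreal (measure \<mu> (cball g a))" by (simp add: emeasure_eq_measure)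
    also have "measure \<mu> (cball g a) \<le> a powr \<beta>"
    proof -
      have "g \<in> Am \<mu> 1 \<beta> A m" using g(1) assms(6) by blast
      then have "measure \<mu> (cball g a) powr 1 \<le> a powr \<beta>" using a by (auto simp: Am_def)
      then show ?thesis by simp
    qed
    finally show ?thesis by (simp add: ennreal_leI)
  qed
  have "emeasure \<mu> U \<le> (\<Sum>c\<in>C'. emeasure \<mu> (cball c \<rho>))"
    unfolding U_def using finC' by (intro emeasure_subadditive_finite) (auto simp: assms(2))
  also have "\<dots> \<le> of_nat (card C') * ennreal (a powr \<beta>)"
    by (rule sum_bounded_above) (rule each)
  also have "\<dots> \<le> ecard C * ennreal (a powr \<beta>)"
  proof -
    have "card C' \<le> card C" using C(3) by (intro card_mono) (auto simp: C'_def)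
    then have "(of_nat (card C') :: ennreal) \<le> ecard C" using C(3) by (simp add: ecard_def)
    then show ?thesis by (rule mult_right_mono) simp
  qed
  also have "\<dots> = (hs_N \<rho> E * ennreal (a powr s)) * ennreal (a powr d)"
  proof -
    have "a powr \<beta> = a powr s * a powr d" using a by (simp add: d_def powr_add[symmetric])
    then show ?thesis using C(4) by (simp add: ennreal_mult mult.assoc)
  qed
  also have "\<dots> \<le> ennreal k' * ennreal (a powr d)"
    using \<rho>(3) k'(2) by (intro mult_right_mono) (auto simp: a_def intro: order.trans)
  also have "\<dots> = ennreal (k' * a powr d)" using k' by (simp add: ennreal_mult)
  also have "\<dots> \<le> ennreal y"
  proof -
    have "a powr d \<le> z" using e2 a \<rho> by (simp add: a_def)
    then have "k' * a powr d \<le> k' * z" using k' by (intro mult_left_mono) auto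
    also have "\<dots> = y" using k' by (simp add: z_def)
    finally show ?thesis by (rule ennreal_leI)
  qed
  finally show ?thesis using U GU by blast
qed

lemma null_piece2:
  fixes \<mu> :: "'a::metric_space measure"
  assumes "prob_space \<mu>" "sets \<mu> = sets borel"
    "hs_Hbar s E < \<infinity>" "s < \<beta>" "G \<subseteq> E" "G \<subseteq> Am \<mu> 1 \<beta> A m"
  shows "\<exists>N\<in>sets \<mu>. G \<subseteq> N \<and> emeasure \<mu> N = 0"
proof -
  have "\<forall>j. \<exists>U\<in>sets \<mu>. G \<subseteq> U \<and> emeasure \<mu> U \<le> ennreal (1 / real (Suc j))"
    using null_piece[OF assms] by simp
  then obtain U where U: "\<And>j. U j \<in> sets \<mu>" "\<And>j. G \<subseteq> U j" "\<And>j. emeasure \<mu> (U j) \<le> ennreal (1 / real (Suc j))"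
    by metis
  define N where "N = (\<Inter>j. U j)"
  have N: "N \<in> sets \<mu>" using U(1) by (auto simp: N_def)
  have le: "emeasure \<mu> N \<le> ennreal (1 / real (Suc j))" for j
  proof -
    have "emeasure \<mu> N \<le> emeasure \<mu> (U j)" using U(1) by (intro emeasure_mono) (auto simp: N_def)
    then show ?thesis using U(3) by (rule order.trans)
  qed
  have "emeasure \<mu> N = 0"
  proof (rule ccontr)
    assume "emeasure \<mu> N \<noteq> 0"
    then have "0 < emeasure \<mu> N" by (simp add: zero_less_iff_neq_zero)
    then obtain w where w: "0 < w" "ennreal w < emeasure \<mu> N" by (rule ennreal_pos_real_below)
    obtain n where n: "n > 0" "inverse (real n) < w" using ex_inverse_of_nat_less[OF w(1)] by blast
    have "1 / real (Suc (n - 1)) < w" using n by (simp add: inverse_eq_divide)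
    then have "ennreal (1 / real (Suc (n - 1))) < ennreal w" using w(1) by (simp add: ennreal_less_iff)
    then show False using le[of "n - 1"] w(2) by simp
  qed
  moreover have "G \<subseteq> N" using U(2) by (auto simp: N_def)
  ultimately show ?thesis using N by blast
qed

lemma DIM:
  fixes \<mu> :: "'a::metric_space measure"
  assumes "prob_space \<mu>" "sets \<mu> = sets borel" "A \<subseteq> E_low \<mu> \<alpha>" "emeasure \<mu> A > 0"
    "hs_H s A < \<infinity>"
  shows "\<alpha> \<le> s"
proof (rule ccontr)
  assume "\<not> \<alpha> \<le> s"
  then have s: "s < \<alpha>" by simp
  define \<beta> where "\<beta> = (s + \<alpha>) / 2"
  have b: "s < \<beta>" "\<beta> < \<alpha> * 1" using s by (auto simp: \<beta>_def)
  have key: "\<exists>e>0. \<forall>\<rho>. 0 < \<rho> \<and> \<rho> < e \<longrightarrow> measure \<mu> (cball x \<rho>) powr 1 \<le> \<rho> powr \<beta>" if "x \<in> A" for x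
    using KEY_low[OF assms(1,2) _ b(2)] assms(3) that by auto
  obtain Es where Es: "A \<subseteq> (\<Union>i. Es i)" "(\<Sum>i. hs_Hbar s (Es i)) < \<infinity>"
    using assms(5) unfolding hs_H_def by (auto simp: INF_less_iff)
  have fin: "hs_Hbar s (Es i) < \<infinity>" for i using suminf_term_le Es(2) by (rule le_less_trans)
  define G where "G n = (case prod_decode n of (i, m) \<Rightarrow> Es i \<inter> Am \<mu> 1 \<beta> A m)" for n
  have "\<exists>N\<in>sets \<mu>. G n \<subseteq> N \<and> emeasure \<mu> N = 0" for n
  proof -
    obtain i m where im: "prod_decode n = (i, m)" by (cases "prod_decode n")
    show ?thesis using null_piece2[OF assms(1,2) fin[of i] b(1), of "G n" A m] im by (auto simp: G_def)
  qed
  then obtain N where N: "\<And>n. N n \<in> sets \<mu>" "\<And>n. G n \<subseteq> N n" "\<And>n. emeasure \<mu> (N n) = 0"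
    by metis
  have cov: "A \<subseteq> (\<Union>n. N n)"
  proof
    fix x assume x: "x \<in> A"
    obtain i where i: "x \<in> Es i" using Es(1) x by blast
    obtain m where m: "x \<in> Am \<mu> 1 \<beta> A m" using Am_cover[of A \<mu> 1 \<beta>] key x by blast
    obtain n where "prod_decode n = (i, m)" using Ginj by blast
    then have "x \<in> G n" using i m by (simp add: G_def)
    then show "x \<in> (\<Union>n. N n)" using N(2) by blast
  qed
  have "emeasure \<mu> A \<le> emeasure \<mu> (\<Union>n. N n)"
    using cov N(1) by (intro emeasure_mono) auto
  also have "\<dots> \<le> (\<Sum>n. emeasure \<mu> (N n))"
    using N(1) by (intro emeasure_subadditive_countably) auto
  also have "\<dots> = 0" by (simp add: N(3))
  finally show False using assms(4) by simp
qed

lemma hsH_le_hsP: "hs_H s A \<le> hs_P s A"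
proof -
  have bar: "hs_Hbar s E \<le> hs_Pbar s E" for E :: "'a::metric_space set"
  proof -
    have "hs_Hbar s E \<le> Liminf (at_right 0) (\<lambda>r. hs_M r E * ennreal ((2 * r) powr s))"
      unfolding hs_Hbar_def
    proof (rule Liminf_mono)
      show "\<forall>\<^sub>F r in at_right 0. hs_N r E * ennreal ((2 * r) powr s) \<le> hs_M r E * ennreal ((2 * r) powr s)"
        unfolding eventually_at_right_field
        by (intro exI[of _ 1]) (auto intro!: mult_right_mono hs_N_le_hs_M)
    qed
    also have "\<dots> \<le> hs_Pbar s E" unfolding hs_Pbar_def
      by (rule Liminf_le_Limsup) simp
    finally show ?thesis .
  qed
  show ?thesis unfolding hs_H_def hs_P_def
    by (rule INF_mono) (auto intro!: suminf_le summableI bar)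
qed




lemma fin_cases: fixes X Y c :: ennreal
  assumes "X < \<infinity> \<Longrightarrow> Y = 0" shows "c * Y \<le> X"
proof (cases "X < \<infinity>")
  case True then show ?thesis using assms by simp
next
  case False then have "X = \<infinity>" by (simp add: not_less top_unique)
  then show ?thesis by simp
qed

theorem lemma3p5:
  fixes \<mu> :: "'a::euclidean_space measure" and \<alpha> q t \<delta> :: real
  assumes "prob_space \<mu>" and "sets \<mu> = sets borel" and "compact (msupp \<mu>)"
    and "\<alpha> \<ge> 0" and "\<delta> > 0" and "\<delta> \<le> \<alpha> * q + t"
  shows
   "(q \<le> 0 \<longrightarrow> (\<forall>A. A \<subseteq> Ebar_up \<mu> \<alpha> \<longrightarrow> A \<in> sets borel \<longrightarrow>
        hs_P (\<alpha> * q + t - \<delta>) A \<ge> ennreal (2 powr (\<alpha> * q - \<delta>)) * mf_P \<mu> q t A))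
  \<and> (q \<ge> 0 \<longrightarrow> (\<forall>A. A \<subseteq> E_low \<mu> \<alpha> \<longrightarrow> A \<in> sets borel \<longrightarrow>
        hs_P (\<alpha> * q + t - \<delta>) A \<ge> ennreal (2 powr (\<alpha> * q - \<delta>)) * mf_P \<mu> q t A))
  \<and> (\<forall>A. A \<subseteq> E_low \<mu> \<alpha> \<longrightarrow> A \<in> sets borel \<longrightarrow> emeasure \<mu> A > 0 \<longrightarrow>
        upper_dim_MB A \<ge> ereal \<alpha>)
  \<and> (q \<le> 0 \<longrightarrow> (\<forall>A. A \<subseteq> Ebar_up \<mu> \<alpha> \<longrightarrow> A \<in> sets borel \<longrightarrow>
        hs_H (\<alpha> * q + t - \<delta>) A \<ge> ennreal (2 powr (\<alpha> * q - \<delta>)) * mf_H \<mu> q t A))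
  \<and> (q \<ge> 0 \<longrightarrow> (\<forall>A. A \<subseteq> E_low \<mu> \<alpha> \<longrightarrow> A \<in> sets borel \<longrightarrow>
        hs_H (\<alpha> * q + t - \<delta>) A \<ge> ennreal (2 powr (\<alpha> * q - \<delta>)) * mf_H \<mu> q t A))
  \<and> (\<forall>A. A \<subseteq> E_low \<mu> \<alpha> \<longrightarrow> A \<in> sets borel \<longrightarrow> emeasure \<mu> A > 0 \<longrightarrow>
        lower_dim_MB A \<ge> ereal \<alpha>)"
proof -
  define s0 where "s0 = \<alpha> * q + t - \<delta>"
  define \<gamma> where "\<gamma> = \<alpha> * q - \<delta> / 2"
  define d where "d = \<delta> / 2"
  have eq: "\<gamma> + t = s0 + d" by (simp add: s0_def \<gamma>_def d_def)
  have d: "d > 0" using assms(5) by (simp add: d_def)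
  have g: "\<gamma> < \<alpha> * q" using assms(5) by (simp add: \<gamma>_def)
  have sup1: "Ebar_up \<mu> \<alpha> \<subseteq> msupp \<mu>" by (auto simp: Ebar_up_def)
  have sup2: "E_low \<mu> \<alpha> \<subseteq> msupp \<mu>" by (auto simp: E_low_def)
  have up: "\<exists>e>0. \<forall>\<rho>. 0 < \<rho> \<and> \<rho> < e \<longrightarrow> measure \<mu> (cball x \<rho>) powr q \<le> \<rho> powr \<gamma>"
    if "q \<le> 0" "x \<in> Ebar_up \<mu> \<alpha>" for x using KEY_up[OF assms(1,2) that(1) g that(2)] .
  have low: "\<exists>e>0. \<forall>\<rho>. 0 < \<rho> \<and> \<rho> < e \<longrightarrow> measure \<mu> (cball x \<rho>) powr q \<le> \<rho> powr \<gamma>"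
    if "q \<ge> 0" "x \<in> E_low \<mu> \<alpha>" for x using KEY_low[OF assms(1,2) that(1) g that(2)] .
  have P1: "hs_P s0 A \<ge> ennreal (2 powr (\<alpha> * q - \<delta>)) * mf_P \<mu> q t A"
    if hq: "q \<le> 0" and hA: "A \<subseteq> Ebar_up \<mu> \<alpha>" for A
  proof (rule fin_cases)
    assume fin: "hs_P s0 A < \<infinity>"
    have sub: "A \<subseteq> msupp \<mu>" using hA sup1 by (rule order.trans)
    have k: "\<exists>e>0. \<forall>\<rho>. 0 < \<rho> \<and> \<rho> < e \<longrightarrow> measure \<mu> (cball x \<rho>) powr q \<le> \<rho> powr \<gamma>"
      if "x \<in> A" for x
    proof -
      have "x \<in> Ebar_up \<mu> \<alpha>" using hA that by blast
      then show ?thesis by (rule up[OF hq])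
    qed
    show "mf_P \<mu> q t A = 0" by (rule P_main[OF assms(3) sub d eq k fin])
  qed
  have P2: "hs_P s0 A \<ge> ennreal (2 powr (\<alpha> * q - \<delta>)) * mf_P \<mu> q t A"
    if hq: "q \<ge> 0" and hA: "A \<subseteq> E_low \<mu> \<alpha>" for A
  proof (rule fin_cases)
    assume fin: "hs_P s0 A < \<infinity>"
    have sub: "A \<subseteq> msupp \<mu>" using hA sup2 by (rule order.trans)
    have k: "\<exists>e>0. \<forall>\<rho>. 0 < \<rho> \<and> \<rho> < e \<longrightarrow> measure \<mu> (cball x \<rho>) powr q \<le> \<rho> powr \<gamma>"
      if "x \<in> A" for x
    proof -
      have "x \<in> E_low \<mu> \<alpha>" using hA that by blast
      then show ?thesis by (rule low[OF hq])
    qed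
    show "mf_P \<mu> q t A = 0" by (rule P_main[OF assms(3) sub d eq k fin])
  qed
  have H1: "hs_H s0 A \<ge> ennreal (2 powr (\<alpha> * q - \<delta>)) * mf_H \<mu> q t A"
    if hq: "q \<le> 0" and hA: "A \<subseteq> Ebar_up \<mu> \<alpha>" for A
  proof (rule fin_cases)
    assume fin: "hs_H s0 A < \<infinity>"
    have sub: "A \<subseteq> msupp \<mu>" using hA sup1 by (rule order.trans)
    have k: "\<exists>e>0. \<forall>\<rho>. 0 < \<rho> \<and> \<rho> < e \<longrightarrow> measure \<mu> (cball x \<rho>) powr q \<le> \<rho> powr \<gamma>"
      if "x \<in> A" for x
    proof -
      have "x \<in> Ebar_up \<mu> \<alpha>" using hA that by blast
      then show ?thesis by (rule up[OF hq])
    qed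
    show "mf_H \<mu> q t A = 0" by (rule H_main[OF assms(3) sub d eq k fin])
  qed
  have H2: "hs_H s0 A \<ge> ennreal (2 powr (\<alpha> * q - \<delta>)) * mf_H \<mu> q t A"
    if hq: "q \<ge> 0" and hA: "A \<subseteq> E_low \<mu> \<alpha>" for A
  proof (rule fin_cases)
    assume fin: "hs_H s0 A < \<infinity>"
    have sub: "A \<subseteq> msupp \<mu>" using hA sup2 by (rule order.trans)
    have k: "\<exists>e>0. \<forall>\<rho>. 0 < \<rho> \<and> \<rho> < e \<longrightarrow> measure \<mu> (cball x \<rho>) powr q \<le> \<rho> powr \<gamma>"
      if "x \<in> A" for x
    proof -
      have "x \<in> E_low \<mu> \<alpha>" using hA that by blast
      then show ?thesis by (rule low[OF hq])
    qed
    show "mf_H \<mu> q t A = 0" by (rule H_main[OF assms(3) sub d eq k fin])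
  qed
  have D1: "lower_dim_MB A \<ge> ereal \<alpha>" if "A \<subseteq> E_low \<mu> \<alpha>" "emeasure \<mu> A > 0" for A
    unfolding lower_dim_MB_def
  proof (rule Inf_greatest)
    fix x assume "x \<in> ereal ` {s. s \<ge> 0 \<and> hs_H s A = 0}"
    then obtain s where s: "x = ereal s" "hs_H s A = 0" by blast
    have "\<alpha> \<le> s" using DIM[OF assms(1,2) that] s(2) by simp
    then show "ereal \<alpha> \<le> x" using s(1) by simp
  qed
  have D2: "upper_dim_MB A \<ge> ereal \<alpha>" if "A \<subseteq> E_low \<mu> \<alpha>" "emeasure \<mu> A > 0" for A
    unfolding upper_dim_MB_def
  proof (rule Inf_greatest)
    fix x assume "x \<in> ereal ` {s. s \<ge> 0 \<and> hs_P s A = 0}"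
    then obtain s where s: "x = ereal s" "hs_P s A = 0" by blast
    have "hs_H s A \<le> 0" using hsH_le_hsP[of s A] s(2) by simp
    then have "hs_H s A < \<infinity>" by simp
    then have "\<alpha> \<le> s" using DIM[OF assms(1,2) that] by simp
    then show "ereal \<alpha> \<le> x" using s(1) by simp
  qed
  show ?thesis unfolding s0_def[symmetric]
    apply (intro conjI impI allI)
         apply (erule P1, assumption)
        apply (erule P2, assumption)
       apply (erule D2, assumption)
      apply (erule H1, assumption)
     apply (erule H2, assumption)
    apply (erule D1, assumption)
    done
qed


end
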